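(* Assume the standing hypotheses on $H$ (Conditions A, B, C, in particular $\Lambda^{\sup}<\infty$; no assumption on $\Lambda^{\inf}$) and suppose $k>1$. Let $0<T<\infty$, let $h:\mathbb{R}^n\to\mathbb{R}$ be continuous with $\inf_{\mathbb{R}^n}h>-\infty$, let $\chi:(0,T)\to\mathbb{R}$ be bounded and continuous, let $\sigma\ge0$, and let $Z:\mathbb{R}\to[0,\infty)$ be non-increasing and continuous. Let $u$ be lower semicontinuous on $\mathbb{R}^n\times[0,T)$, be a viscosity super-solution of $\mathcal{P}_\sigma(t,u,u_t,Du,D^2u)\le 0$ in $\mathbb{R}^n_T$, and satisfy $u(x,0)\ge h(x)$ for all $x$. Fix $z\in\mathbb{R}^n$ and suppose $\sup_{B^R_T}(-u)=o(R^\beta)$ as $R\to\infty$. (a) If $0\le\sigma\le\gamma/2$ and $\beta=\gamma^*$, then for all $(x,t)\in\mathbb{R}^n_T$: $u(x,t)\ge\inf_{\mathbb{R}^n}h-t\sup_{(0,T)}|\chi|$ when $\sigma=0$, and $u(x,t)\ge\inf_{\mathbb{R}^n}h$ when $0<\sigma\le\gamma/2$. (b) If $\sigma>\gamma/2$ and $\beta=\sigma^*$, then $u(x,t)\ge\inf_{\mathbb{R}^n}h$ for all $(x,t)\in\mathbb{R}^n_T$.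
   Context: Let $n\ge2$, let $S^{n\times n}$ denote the real symmetric $n\times n$ matrices with the usual partial order, $I$ the identity, $O$ the zero matrix, and for a unit vector $e$ let $(e\otimes e)_{ij}=e_ie_j$. $H:\mathbb{R}^n\times S^{n\times n}\to\mathbb{R}$ is continuous and satisfies: Condition A: $H(q,X)\le H(q,Y)$ whenever $X\le Y$, and $H(q,O)=0$ for all $q$. Condition B: there is $k_1\ge0$ with $H(\theta q,X)=|\theta|^{k_1}H(q,X)$ for all $\theta\in\mathbb{R}$ and $H(q,\theta X)=\theta H(q,X)$ for all $\theta>0$. Condition C: $\max_{|e|=1}H(e,-I)<0<\min_{|e|=1}H(e,I)$ and $\Lambda^{\sup}:=\sup_{\lambda\in\mathbb{R}}\max_{|e|=1}H(e,\lambda e\otimes e+I)<\infty$. Also $\Lambda^{\inf}:=\inf_{\lambda}\min_{|e|=1}H(e,\lambda e\otimes e-I)$. Set $k=k_1+1$, $\gamma=k+1$, and for $k>1$, $\gamma^*=\gamma/(\gamma-2)$; for $\sigma>1$, $\sigma^*=\sigma/(\sigma-1)$. $\mathbb{R}^n_T=\mathbb{R}^n\times(0,T)$, and for fixed $z$, $B^R_T=\{(x,t):|x-z|\le R,\ 0<t<T\}$. The operator is $\mathcal{P}_\sigma(t,u,u_t,Du,D^2u)=H(Du,D^2u+Z(u)Du\otimes Du)+\chi(t)|Du|^\sigma-u_t$, with the convention $|q|^0=1$. Solutions, sub-solutions and super-solutions are in the viscosity sense. *)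

theory Defs
  imports "HOL-Analysis.Analysis"
begin

text \<open>Powers with the convention |q|^0 = 1 (also for q = 0).\<close>
definition pw :: "real \<Rightarrow> real \<Rightarrow> real" where
  "pw x a = (if a = 0 then 1 else x powr a)"

definition symm :: "real^'n^'n \<Rightarrow> bool" where
  "symm X \<longleftrightarrow> transpose X = X"

definition mat_le :: "real^'n^'n \<Rightarrow> real^'n^'n \<Rightarrow> bool" where
  "mat_le X Y \<longleftrightarrow> (\<forall>v. 0 \<le> v \<bullet> ((Y - X) *v v))"

definition outer :: "real^'n \<Rightarrow> real^'n \<Rightarrow> real^'n^'n" where
  "outer e f = (\<chi> i j. e $ i * f $ j)"

definition condA :: "(real^'n \<Rightarrow> real^'n^'n \<Rightarrow> real) \<Rightarrow> bool" where
  "condA H \<longleftrightarrow>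
     (\<forall>q X Y. symm X \<and> symm Y \<and> mat_le X Y \<longrightarrow> H q X \<le> H q Y) \<and> (\<forall>q. H q 0 = 0)"

definition condB :: "(real^'n \<Rightarrow> real^'n^'n \<Rightarrow> real) \<Rightarrow> real \<Rightarrow> bool" where
  "condB H k1 \<longleftrightarrow> k1 \<ge> 0 \<and>
     (\<forall>\<theta> q X. symm X \<longrightarrow> H (\<theta> *\<^sub>R q) X = pw \<bar>\<theta>\<bar> k1 * H q X) \<and>
     (\<forall>\<theta> q X. symm X \<and> \<theta> > 0 \<longrightarrow> H q (\<theta> *\<^sub>R X) = \<theta> * H q X)"

definition condC :: "(real^'n \<Rightarrow> real^'n^'n \<Rightarrow> real) \<Rightarrow> bool" where
  "condC H \<longleftrightarrow>
     (SUP e\<in>sphere 0 1. H e (- mat 1)) < 0 \<and> 0 < (INF e\<in>sphere 0 1. H e (mat 1)) \<and>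
     (\<exists>M. \<forall>l e. norm e = 1 \<longrightarrow> H e (l *\<^sub>R outer e e + mat 1) \<le> M)"

definition H_cont :: "(real^'n \<Rightarrow> real^'n^'n \<Rightarrow> real) \<Rightarrow> bool" where
  "H_cont H \<longleftrightarrow> continuous_on (UNIV \<times> {X. symm X}) (\<lambda>(q, X). H q X)"

definition C21_on ::
  "(real^'n \<Rightarrow> real \<Rightarrow> real) \<Rightarrow> (real^'n \<Rightarrow> real \<Rightarrow> real) \<Rightarrow> (real^'n \<Rightarrow> real \<Rightarrow> real^'n)
   \<Rightarrow> (real^'n \<Rightarrow> real \<Rightarrow> real^'n^'n) \<Rightarrow> ((real^'n) \<times> real) set \<Rightarrow> bool" where
  "C21_on \<psi> \<psi>t D\<psi> D2\<psi> U \<longleftrightarrow> open U \<and>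
     (\<forall>x t. (x, t) \<in> U \<longrightarrow>
        ((\<lambda>s. \<psi> x s) has_real_derivative \<psi>t x t) (at t) \<and>
        ((\<lambda>y. \<psi> y t) has_derivative (\<lambda>v. D\<psi> x t \<bullet> v)) (at x) \<and>
        ((\<lambda>y. D\<psi> y t) has_derivative (\<lambda>v. D2\<psi> x t *v v)) (at x)) \<and>
     continuous_on U (\<lambda>(x, t). \<psi> x t) \<and>
     continuous_on U (\<lambda>(x, t). \<psi>t x t) \<and>
     continuous_on U (\<lambda>(x, t). D\<psi> x t) \<and>
     continuous_on U (\<lambda>(x, t). D2\<psi> x t)"

text \<open>Viscosity super-solution of
  P_sigma(t,u,u_t,Du,D^2u) = H(Du, D^2u + Z(u) Du\<otimes>Du) + chi(t)|Du|^sigma - u_t \<le> 0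
  in R^n_T = R^n x (0,T).\<close>
definition visc_super ::
  "(real^'n \<Rightarrow> real^'n^'n \<Rightarrow> real) \<Rightarrow> (real \<Rightarrow> real) \<Rightarrow> (real \<Rightarrow> real) \<Rightarrow> real \<Rightarrow> real
   \<Rightarrow> (real^'n \<Rightarrow> real \<Rightarrow> real) \<Rightarrow> bool" where
  "visc_super H Z c \<sigma> T u \<longleftrightarrow>
     (\<forall>y s \<psi> \<psi>t D\<psi> D2\<psi> U.
        0 < s \<and> s < T \<and> (y, s) \<in> U \<and> U \<subseteq> {(x, t). 0 < t \<and> t < T} \<and>
        C21_on \<psi> \<psi>t D\<psi> D2\<psi> U \<and>
        (\<forall>x t. (x, t) \<in> U \<longrightarrow> u y s - \<psi> y s \<le> u x t - \<psi> x t)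
        \<longrightarrow> H (D\<psi> y s) (D2\<psi> y s + Z (u y s) *\<^sub>R outer (D\<psi> y s) (D\<psi> y s))
            + c s * pw (norm (D\<psi> y s)) \<sigma> - \<psi>t y s \<le> 0)"

definition lsc_on :: "((real^'n) \<times> real) set \<Rightarrow> (real^'n \<Rightarrow> real \<Rightarrow> real) \<Rightarrow> bool" where
  "lsc_on D u \<longleftrightarrow> (\<forall>p\<in>D. \<forall>\<epsilon>>0. \<exists>\<delta>>0. \<forall>q\<in>D.
      dist q p < \<delta> \<longrightarrow> u (fst p) (snd p) - \<epsilon> < u (fst q) (snd q))"

definition cyl :: "real^'n \<Rightarrow> real \<Rightarrow> real \<Rightarrow> ((real^'n) \<times> real) set" where
  "cyl z R T = {(x, t). norm (x - z) \<le> R \<and> 0 < t \<and> t < T}"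

text \<open>sup over B^R_T of (-u) is o(R^beta) as R \<rightarrow> \<infinity> (beta > 0 in all applications;
  the supremum is bounded below by a constant, so this is the one-sided form).\<close>
definition neg_part_little_o :: "(real^'n \<Rightarrow> real \<Rightarrow> real) \<Rightarrow> real^'n \<Rightarrow> real \<Rightarrow> real \<Rightarrow> bool" where
  "neg_part_little_o u z T \<beta> \<longleftrightarrow>
     (\<forall>\<epsilon>>0. \<forall>\<^sub>F R in at_top. \<forall>x t. (x, t) \<in> cyl z R T \<longrightarrow> - u x t \<le> \<epsilon> * R powr \<beta>)"

end

theory Submission
  imports Defs
begin


lemma outer_mv: "outer e f *v v = (f \<bullet> v) *\<^sub>R e"
  by (simp add: vec_eq_iff outer_def matrix_vector_mult_def inner_vec_def sum_distrib_left algebra_simps)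
lemma mv_add: "(X + Y) *v v = X *v v + Y *v v" for X :: "real^'n^'m"
  by (simp add: matrix_vector_mult_def vec_eq_iff sum.distrib algebra_simps)
lemma mv_neg: "(- X) *v v = - (X *v v)" for X :: "real^'n^'m"
  by (simp add: matrix_vector_mult_def vec_eq_iff sum_negf)
lemma mv_scale: "(a *\<^sub>R X) *v v = a *\<^sub>R (X *v v)" for X :: "real^'n^'m"
  by (simp add: matrix_vector_mult_def vec_eq_iff sum_distrib_left mult.assoc)

definition rho :: "real^'n \<Rightarrow> real^'n \<Rightarrow> real" where
  "rho z x = 1 + (x - z) \<bullet> (x - z)"

lemma rho_pos: "rho z x \<ge> 1"
  by (simp add: rho_def)
lemma rho_gt0: "rho z x > 0"
  using rho_pos[of z x] by linarith
lemma rho_nz[simp]: "rho z x \<noteq> 0"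
  using rho_pos[of z x] by linarith

lemma d_rho: "((\<lambda>y. rho z y) has_derivative (\<lambda>v. 2 * ((x - z) \<bullet> v))) (at x)"
  unfolding rho_def
  by (auto intro!: derivative_eq_intros simp: inner_commute)

lemma dg: "((\<lambda>y. rho z y powr (b/2)) has_derivative
   (\<lambda>v. ((b * rho z x powr (b/2 - 1)) *\<^sub>R (x - z)) \<bullet> v)) (at x)"
proof -
  have p: "rho z x > 0" using rho_pos[of z x] by linarith
  show ?thesis
    apply (rule has_derivative_eq_rhs)
     apply (rule has_derivative_powr[OF d_rho has_derivative_const])
    using p apply simp
    using p by (auto simp: powr_diff fun_eq_iff inner_scaleR_left)
qed

lemma mat1_mv: "mat 1 *v v = v" by simp

lemma d2g: "((\<lambda>y. (b * rho z y powr (b/2 - 1)) *\<^sub>R (y - z)) has_derivative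
   (\<lambda>v. ((b * rho z x powr (b/2 - 1)) *\<^sub>R mat 1
        + (b * (b - 2) * rho z x powr (b/2 - 2)) *\<^sub>R outer (x - z) (x - z)) *v v)) (at x)"
proof -
  have p: "rho z x > 0" using rho_pos[of z x] by linarith
  have PQ: "rho z x powr (b/2 - 1) = rho z x powr (b/2 - 2) * rho z x"
  proof -
    have "rho z x powr (b/2 - 1) = rho z x powr ((b/2 - 2) + 1)"
      by (rule arg_cong[where f="\<lambda>e. rho z x powr e"]) simp
    also have "\<dots> = rho z x powr (b/2 - 2) * rho z x powr 1" by (rule powr_add)
    also have "\<dots> = rho z x powr (b/2 - 2) * rho z x" using p by simp
    finally show ?thesis .
  qed
  have sc: "\<And>v. b * (rho z x powr (b/2 - 1) * (2 * ((x - z) \<bullet> v) * (b/2 - 1))) / rho z x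
      = b * (b - 2) * rho z x powr (b/2 - 2) * ((x - z) \<bullet> v)"
    unfolding PQ using p by (simp add: field_simps)
  show ?thesis
    apply (rule has_derivative_eq_rhs)
     apply (rule has_derivative_scaleR)
      apply (rule has_derivative_mult[OF has_derivative_const])
      apply (rule has_derivative_powr[OF d_rho has_derivative_const])
    using p apply simp
     apply simp
     apply (rule has_derivative_diff[OF has_derivative_ident has_derivative_const])
    by (auto simp: fun_eq_iff mv_add mv_scale outer_mv sc)
qed

definition gg :: "real^'n \<Rightarrow> real \<Rightarrow> real^'n \<Rightarrow> real" where
  "gg z b x = rho z x powr (b/2)"
definition Dg :: "real^'n \<Rightarrow> real \<Rightarrow> real^'n \<Rightarrow> real^'n" where
  "Dg z b x = (b * rho z x powr (b/2 - 1)) *\<^sub>R (x - z)"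
definition D2g :: "real^'n \<Rightarrow> real \<Rightarrow> real^'n \<Rightarrow> real^'n^'n" where
  "D2g z b x = (b * rho z x powr (b/2 - 1)) *\<^sub>R mat 1
        + (b * (b - 2) * rho z x powr (b/2 - 2)) *\<^sub>R outer (x - z) (x - z)"

lemma cont_rho[continuous_intros]: "continuous_on S f \<Longrightarrow> continuous_on S (\<lambda>p. rho z (f p))"
  unfolding rho_def by (intro continuous_intros)

lemma cont_outer[continuous_intros]:
  "continuous_on S f \<Longrightarrow> continuous_on S g \<Longrightarrow> continuous_on S (\<lambda>p. outer (f p) (g p))"
  unfolding outer_def by (intro continuous_intros)

lemma cont_gg[continuous_intros]: "continuous_on S f \<Longrightarrow> continuous_on S (\<lambda>p. gg z b (f p))"
  unfolding gg_def
  by (intro continuous_intros) (auto intro: order.strict_trans2[OF zero_less_one rho_pos])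

lemma cont_Dg[continuous_intros]: "continuous_on S f \<Longrightarrow> continuous_on S (\<lambda>p. Dg z b (f p))"
  unfolding Dg_def
  by (intro continuous_intros) (auto intro: order.strict_trans2[OF zero_less_one rho_pos])

lemma cont_D2g[continuous_intros]: "continuous_on S f \<Longrightarrow> continuous_on S (\<lambda>p. D2g z b (f p))"
  unfolding D2g_def
  by (intro continuous_intros) (auto intro: order.strict_trans2[OF zero_less_one rho_pos])

lemma C21_barrier:
  assumes U: "open U" "U \<subseteq> {(x, t). t < t1}"
  shows "C21_on (\<lambda>x t. m - a*t - e/(t1-t) - th*exp(L*t)*gg z b x)
                (\<lambda>x t. -a - e/(t1-t)^2 - th*L*exp(L*t)*gg z b x)
                (\<lambda>x t. (-(th*exp(L*t))) *\<^sub>R Dg z b x)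
                (\<lambda>x t. (-(th*exp(L*t))) *\<^sub>R D2g z b x) U"
  unfolding C21_on_def
proof (intro conjI allI impI)
  show "open U" by fact
  fix x t assume xt: "(x, t) \<in> U"
  then have tt: "t < t1" using U by auto
  show "((\<lambda>s. m - a * s - e/(t1-s) - th*exp(L * s)*gg z b x) has_real_derivative
      (-a - e/(t1-t)^2 - th*L*exp(L*t)*gg z b x)) (at t)"
    using tt by (auto intro!: derivative_eq_intros simp: power2_eq_square)
  show "((\<lambda>y. m - a*t - e/(t1-t) - th*exp(L*t)*gg z b y) has_derivative
      (\<lambda>v. (-(th*exp(L*t))) *\<^sub>R Dg z b x \<bullet> v)) (at x)"
    unfolding gg_def Dg_def
    by (rule has_derivative_eq_rhs, (rule has_derivative_diff has_derivative_const has_derivative_mult dg)+)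
       (simp add: fun_eq_iff)
  show "((\<lambda>y. (-(th*exp(L*t))) *\<^sub>R Dg z b y) has_derivative
      (\<lambda>v. ((-(th*exp(L*t))) *\<^sub>R D2g z b x) *v v)) (at x)"
    unfolding D2g_def Dg_def
    by (rule has_derivative_eq_rhs, (rule has_derivative_scaleR_right d2g)+)
       (simp add: fun_eq_iff mv_scale mv_neg)
next
  have nz: "\<And>p. p \<in> U \<Longrightarrow> t1 - snd p \<noteq> 0" using U by auto
  show "continuous_on U (\<lambda>(x, t). m - a*t - e/(t1-t) - th*exp(L*t)*gg z b x)"
    unfolding case_prod_beta using nz by (intro continuous_intros) auto
  show "continuous_on U (\<lambda>(x, t). -a - e/(t1-t)^2 - th*L*exp(L*t)*gg z b x)"
    unfolding case_prod_beta using nz by (intro continuous_intros) auto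
  show "continuous_on U (\<lambda>(x, t). (-(th*exp(L*t))) *\<^sub>R Dg z b x)"
    unfolding case_prod_beta by (intro continuous_intros)
  show "continuous_on U (\<lambda>(x, t). (-(th*exp(L*t))) *\<^sub>R D2g z b x)"
    unfolding case_prod_beta by (intro continuous_intros)
qed


lemma symm_mat1: "symm (mat 1 :: real^'n^'n)"
  by (simp add: symm_def transpose_mat)
lemma symm_outer: "symm (outer w w)"
  by (simp add: symm_def transpose_def outer_def vec_eq_iff mult.commute)
lemma symm_add: "symm X \<Longrightarrow> symm Y \<Longrightarrow> symm (X + Y)"
  by (simp add: symm_def transpose_def vec_eq_iff)
lemma symm_scale: "symm X \<Longrightarrow> symm (a *\<^sub>R X)"
  by (simp add: symm_def transpose_def vec_eq_iff)
lemma symm_neg: "symm X \<Longrightarrow> symm (- X)"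
  by (simp add: symm_def transpose_def vec_eq_iff)
lemma symm_D2g: "symm (D2g z b x)"
  unfolding D2g_def by (intro symm_add symm_scale symm_mat1 symm_outer)
lemma mv_diff: "(X - Y) *v v = X *v v - Y *v v" for X :: "real^'n^'m"
  by (simp add: matrix_vector_mult_def vec_eq_iff sum_subtractf algebra_simps)

lemma powr_split: "r > 0 \<Longrightarrow> a + b = c \<Longrightarrow> r powr a * r powr b = r powr c" for r :: real
  by (simp add: powr_add[symmetric])

lemma norm_w: "norm (x - z) \<le> rho z x powr (1/2)"
proof -
  have "norm (x - z) = sqrt ((x - z) \<bullet> (x - z))" by (simp add: norm_eq_sqrt_inner)
  also have "\<dots> \<le> sqrt (rho z x)" unfolding rho_def by simp
  also have "\<dots> = rho z x powr (1/2)" using rho_gt0[of z x] by (simp add: powr_half_sqrt)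
  finally show ?thesis .
qed

lemma norm_Dg: assumes "b \<ge> 0" "th \<ge> 0"
  shows "norm ((-th) *\<^sub>R Dg z b x) \<le> th * b * rho z x powr ((b-1)/2)"
proof -
  have "norm ((-th) *\<^sub>R Dg z b x) = th * b * rho z x powr (b/2 - 1) * norm (x - z)"
    unfolding Dg_def using assms by simp
  also have "\<dots> \<le> th * b * rho z x powr (b/2 - 1) * rho z x powr (1/2)"
    using assms by (intro mult_left_mono norm_w) auto
  also have "\<dots> = th * b * rho z x powr ((b-1)/2)"
    using powr_split[OF rho_gt0[of z x], of "b/2 - 1" "1/2" "(b-1)/2"] by (simp add: field_simps)
  finally show ?thesis .
qed


lemma PQ_rel: "rho z x powr (b/2 - 1) = rho z x powr (b/2 - 2) * rho z x"
proof -
  have p: "rho z x > 0" by (rule rho_gt0)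
  have "rho z x powr (b/2 - 1) = rho z x powr ((b/2 - 2) + 1)"
    by (rule arg_cong[where f="\<lambda>e. rho z x powr e"]) simp
  also have "\<dots> = rho z x powr (b/2 - 2) * rho z x powr 1" by (rule powr_add)
  also have "\<dots> = rho z x powr (b/2 - 2) * rho z x" using p by simp
  finally show ?thesis .
qed

lemma qf_bound:
  assumes b: "b \<ge> 1" and th: "th \<ge> 0" and Zv: "Zv \<ge> 0"
  shows "mat_le ((th * b * (1 + \<bar>b-2\<bar>) * rho z x powr (b/2-1)) *\<^sub>R (- mat 1))
                ((-th) *\<^sub>R D2g z b x + Zv *\<^sub>R outer p p)"
  unfolding mat_le_def
proof
  fix v
  define P where "P = rho z x powr (b/2-1)"
  define Q where "Q = rho z x powr (b/2-2)"
  define w where "w = x - z"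
  have Q0: "Q \<ge> 0" unfolding Q_def by simp
  have PQ: "P = Q * rho z x" unfolding P_def Q_def by (rule PQ_rel)
  have e: "v \<bullet> ((((-th) *\<^sub>R D2g z b x + Zv *\<^sub>R outer p p)
            - (th * b * (1 + \<bar>b-2\<bar>) * P) *\<^sub>R (- mat 1)) *v v)
        = th * b * \<bar>b-2\<bar> * P * (v \<bullet> v) - th * b * (b - 2) * Q * (w \<bullet> v)^2 + Zv * (p \<bullet> v)^2"
    unfolding D2g_def P_def[symmetric] Q_def[symmetric] w_def[symmetric]
    by (simp add: mv_diff mv_add mv_scale mv_neg outer_mv inner_add_right inner_diff_right
        power2_eq_square algebra_simps inner_commute)
  have cs: "(w \<bullet> v)^2 \<le> (w \<bullet> w) * (v \<bullet> v)"
  proof -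
    have "\<bar>w \<bullet> v\<bar> \<le> norm w * norm v" by (rule Cauchy_Schwarz_ineq2)
    then have "\<bar>w \<bullet> v\<bar>^2 \<le> (norm w * norm v)^2" by (intro power_mono) auto
    then show ?thesis by (simp add: power_mult_distrib dot_square_norm)
  qed
  have ww: "w \<bullet> w \<le> rho z x" unfolding w_def rho_def by simp
  have "(b - 2) * Q * (w \<bullet> v)^2 \<le> \<bar>b-2\<bar> * Q * (w \<bullet> v)^2"
    using Q0 by (intro mult_right_mono) auto
  also have "\<dots> \<le> \<bar>b-2\<bar> * Q * ((w \<bullet> w) * (v \<bullet> v))"
    using Q0 cs by (intro mult_left_mono) auto
  also have "\<dots> \<le> \<bar>b-2\<bar> * Q * (rho z x * (v \<bullet> v))"
    using Q0 ww by (intro mult_left_mono mult_right_mono) auto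
  also have "\<dots> = \<bar>b-2\<bar> * P * (v \<bullet> v)" unfolding PQ by simp
  finally have k: "(b - 2) * Q * (w \<bullet> v)^2 \<le> \<bar>b-2\<bar> * P * (v \<bullet> v)" .
  have "th * b * ((b - 2) * Q * (w \<bullet> v)^2) \<le> th * b * (\<bar>b-2\<bar> * P * (v \<bullet> v))"
    using k b th by (intro mult_left_mono) auto
  moreover have "Zv * (p \<bullet> v)^2 \<ge> 0" using Zv by simp
  ultimately have "0 \<le> th * b * \<bar>b-2\<bar> * P * (v \<bullet> v) - th * b * (b - 2) * Q * (w \<bullet> v)^2 + Zv * (p \<bullet> v)^2"
    by (simp add: algebra_simps)
  then show "0 \<le> v \<bullet> ((((-th) *\<^sub>R D2g z b x + Zv *\<^sub>R outer p p)
            - (th * b * (1 + \<bar>b-2\<bar>) * rho z x powr (b/2-1)) *\<^sub>R (- mat 1)) *v v)"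
    using e unfolding P_def by simp
qed


lemma H_bdd:
  assumes Hc: "H_cont H"
  shows "\<exists>C0\<ge>0. \<forall>e. norm e = 1 \<longrightarrow> - C0 \<le> H e (- mat 1)"
proof -
  have c1: "continuous_on (sphere 0 1) (\<lambda>e. (\<lambda>(q, X). H q X) (e, - mat 1))"
    apply (rule continuous_on_compose2[OF Hc[unfolded H_cont_def]])
     apply (intro continuous_intros)
    by (auto simp: symm_neg symm_mat1)
  have "compact ((\<lambda>e. H e (- mat 1)) ` sphere 0 1)"
    using c1 by (intro compact_continuous_image) auto
  then have "bounded ((\<lambda>e. H e (- mat 1)) ` sphere 0 1)" by (rule compact_imp_bounded)
  then obtain B where B: "\<forall>y\<in>(\<lambda>e. H e (- mat 1)) ` sphere 0 1. norm y \<le> B"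
    by (auto simp: bounded_iff)
  have "\<forall>e. norm e = 1 \<longrightarrow> - max B 0 \<le> H e (- mat 1)"
  proof (intro allI impI)
    fix e :: "real^'a" assume "norm e = 1"
    then have "norm (H e (- mat 1)) \<le> B" using B by auto
    then show "- max B 0 \<le> H e (- mat 1)" by auto
  qed
  then show ?thesis by (intro exI[of _ "max B 0"]) auto
qed

lemma H_zero:
  assumes B: "condB H k1" and k1: "k1 > 0" and Y: "symm Y"
  shows "H 0 Y = 0"
proof -
  have "H ((0::real) *\<^sub>R 0) Y = pw \<bar>0\<bar> k1 * H 0 Y" using B Y unfolding condB_def by blast
  then show ?thesis using k1 by (simp add: pw_def)
qed

lemma H_lower:
  fixes H :: "real^'n \<Rightarrow> real^'n^'n \<Rightarrow> real"
  assumes A: "condA H" and B: "condB H k1" and k1: "0 < k1"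
    and C0: "\<forall>e. norm e = 1 \<longrightarrow> - C0 \<le> H e (- mat 1)" and C0p: "C0 \<ge> 0"
    and b: "1 \<le> b" and bk: "b * k1 \<le> k1 + 2" and th: "0 < th" "th \<le> 1" and Zv: "Zv \<ge> 0"
    and q: "norm q \<le> th * b * rho z x powr ((b-1)/2)"
  shows "- (C0 * b * (1 + \<bar>b-2\<bar>) * b powr k1) * th * gg z b x
         \<le> H q ((-th) *\<^sub>R D2g z b x + Zv *\<^sub>R outer p p)"
proof -
  define P where "P = rho z x powr (b/2-1)"
  define lam where "lam = th * b * (1 + \<bar>b-2\<bar>) * P"
  have P0: "P > 0" unfolding P_def using rho_gt0 by simp
  have lam0: "lam > 0" unfolding lam_def using P0 th b by (auto intro!: mult_pos_pos)
  have symX: "symm ((-th) *\<^sub>R D2g z b x + Zv *\<^sub>R outer p p)"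
    by (intro symm_add symm_scale symm_D2g symm_outer)
  have symY: "symm (lam *\<^sub>R (- mat 1) :: real^'n^'n)"
    by (intro symm_scale symm_neg symm_mat1)
  have le1: "H q (lam *\<^sub>R (- mat 1)) \<le> H q ((-th) *\<^sub>R D2g z b x + Zv *\<^sub>R outer p p)"
    using A symX symY qf_bound[OF b less_imp_le[OF th(1)] Zv, of z x p]
    unfolding condA_def lam_def P_def by blast
  have le2: "- lam * C0 * norm q powr k1 \<le> H q (lam *\<^sub>R (- mat 1))"
  proof (cases "q = 0")
    case True
    then show ?thesis using H_zero[OF B k1 symY] k1 by simp
  next
    case False
    define e where "e = q /\<^sub>R norm q"
    have ne: "norm e = 1" unfolding e_def using False by simp
    have qe: "q = norm q *\<^sub>R e" unfolding e_def using False by simp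
    have "H q (lam *\<^sub>R (- mat 1)) = pw \<bar>norm q\<bar> k1 * H e (lam *\<^sub>R (- mat 1))"
      using B symY qe unfolding condB_def by metis
    also have "\<dots> = norm q powr k1 * (lam * H e (- mat 1))"
    proof -
      have hom: "\<forall>\<theta> q X. symm X \<and> \<theta> > 0 \<longrightarrow> H q (\<theta> *\<^sub>R X) = \<theta> * H q X"
        using B unfolding condB_def by (elim conjE)
      have "H e (lam *\<^sub>R (- mat 1)) = lam * H e (- mat 1)"
        using hom[rule_format, of "- mat 1" lam e] lam0 symm_neg[OF symm_mat1] by blast
      then show ?thesis using k1 by (simp add: pw_def)
    qed
    finally have eq: "H q (lam *\<^sub>R (- mat 1)) = norm q powr k1 * (lam * H e (- mat 1))" .
    have hc: "- C0 \<le> H e (- mat 1)" using C0 ne by blast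
    have "lam * (- C0) \<le> lam * H e (- mat 1)" using lam0 hc by (intro mult_left_mono) auto
    then have "- lam * C0 \<le> lam * H e (- mat 1)" by simp
    then have "norm q powr k1 * (- lam * C0) \<le> norm q powr k1 * (lam * H e (- mat 1))"
      by (intro mult_left_mono) auto
    then show ?thesis unfolding eq by (simp add: algebra_simps)
  qed
  have r1: "rho z x \<ge> 1" by (rule rho_pos)
  have "norm q powr k1 \<le> (th * b * rho z x powr ((b-1)/2)) powr k1"
    using q k1 by (intro powr_mono2) auto
  also have "\<dots> = th powr k1 * b powr k1 * rho z x powr ((b-1)/2 * k1)"
    using th b rho_gt0[of z x] by (simp add: powr_mult powr_powr)
  finally have nq: "norm q powr k1 \<le> th powr k1 * b powr k1 * rho z x powr ((b-1)/2 * k1)" .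
  have thk: "th powr k1 \<le> 1"
    using th k1 powr_mono2[of k1 th 1] by simp
  have Pr: "P * rho z x powr ((b-1)/2 * k1) \<le> rho z x powr (b/2)"
  proof -
    have "P * rho z x powr ((b-1)/2 * k1) = rho z x powr (b/2 - 1 + (b-1)/2 * k1)"
      unfolding P_def using rho_gt0[of z x] by (simp add: powr_add)
    also have "\<dots> \<le> rho z x powr (b/2)"
      using r1 bk by (intro powr_mono) (auto simp: field_simps)
    finally show ?thesis .
  qed
  have "lam * norm q powr k1 \<le> lam * (th powr k1 * b powr k1 * rho z x powr ((b-1)/2 * k1))"
    using lam0 nq by (intro mult_left_mono) auto
  also have "\<dots> = th * b * (1 + \<bar>b-2\<bar>) * b powr k1 * th powr k1 * (P * rho z x powr ((b-1)/2 * k1))"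
    unfolding lam_def by (simp add: algebra_simps)
  also have "\<dots> \<le> th * b * (1 + \<bar>b-2\<bar>) * b powr k1 * 1 * rho z x powr (b/2)"
    using th b thk Pr P0
    by (intro mult_mono mult_nonneg_nonneg) auto
  finally have fin: "lam * norm q powr k1 \<le> th * b * (1 + \<bar>b-2\<bar>) * b powr k1 * rho z x powr (b/2)" by simp
  have "- (C0 * b * (1 + \<bar>b-2\<bar>) * b powr k1) * th * gg z b x
        = - C0 * (th * b * (1 + \<bar>b-2\<bar>) * b powr k1 * rho z x powr (b/2))"
    unfolding gg_def by (simp add: algebra_simps)
  also have "\<dots> \<le> - C0 * (lam * norm q powr k1)"
    using fin C0p by (intro mult_left_mono_neg) auto
  also have "\<dots> = - lam * C0 * norm q powr k1" by simp
  finally show ?thesis using le1 le2 by linarith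
qed


lemma gg_ge1: "b \<ge> 0 \<Longrightarrow> gg z b x \<ge> 1"
  unfolding gg_def using rho_pos[of z x] by (simp add: ge_one_powr_ge_zero)

lemma gg_ge_R: assumes "b \<ge> 0" "norm (x - z) = R" "R \<ge> 0" shows "gg z b x \<ge> R powr b"
proof -
  have "R powr b = (R^2) powr (b/2)"
  proof (cases "R = 0")
    case True then show ?thesis by simp
  next
    case False
    then have Rp: "R > 0" using assms by auto
    have "(R^2) powr (b/2) = (R powr 2) powr (b/2)" using Rp by (simp add: powr_realpow)
    also have "\<dots> = R powr b" by (simp add: powr_powr)
    finally show ?thesis by simp
  qed
  also have "\<dots> \<le> rho z x powr (b/2)"
    using assms by (intro powr_mono2) (auto simp: rho_def dot_square_norm)
  finally show ?thesis unfolding gg_def .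
qed

lemma cover_lemma:
  fixes f g :: "'a::metric_space \<Rightarrow> real"
  assumes K: "compact K"
    and loc: "\<forall>p\<in>K. \<exists>d>0. \<forall>q\<in>K. dist q p < d \<longrightarrow> g p < f q"
  obtains C where "C \<subseteq> K" "finite C" "\<forall>q\<in>K. \<exists>p\<in>C. g p < f q"
proof -
  obtain d where d: "\<And>p. p \<in> K \<Longrightarrow> d p > 0 \<and> (\<forall>q\<in>K. dist q p < d p \<longrightarrow> g p < f q)"
    using loc by metis
  have "K \<subseteq> (\<Union>p\<in>K. ball p (d p))" using d by force
  then obtain C where C: "C \<subseteq> K" "finite C" "K \<subseteq> (\<Union>p\<in>C. ball p (d p))"
    using compactE_image[OF K, of K "\<lambda>p. ball p (d p)"] by auto
  have "\<forall>q\<in>K. \<exists>p\<in>C. g p < f q"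
  proof
    fix q assume q: "q \<in> K"
    then obtain p where p: "p \<in> C" "q \<in> ball p (d p)" using C by blast
    then have "dist q p < d p" by (simp add: dist_commute)
    then show "\<exists>p\<in>C. g p < f q" using d[of p] C p q by blast
  qed
  then show ?thesis using C that by blast
qed

lemma lsc_attains_min:
  fixes f :: "'a::metric_space \<Rightarrow> real"
  assumes K: "compact K" "K \<noteq> {}"
    and lsc: "\<forall>p\<in>K. \<forall>e>0. \<exists>d>0. \<forall>q\<in>K. dist q p < d \<longrightarrow> f p - e < f q"
  shows "\<exists>p\<in>K. \<forall>q\<in>K. f p \<le> f q"
proof -
  have "\<forall>p\<in>K. \<exists>d>0. \<forall>q\<in>K. dist q p < d \<longrightarrow> f p - 1 < f q" using lsc by auto
  then obtain C where C: "C \<subseteq> K" "finite C" "\<forall>q\<in>K. \<exists>p\<in>C. f p - 1 < f q"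
    using cover_lemma[OF K(1), of "\<lambda>p. f p - 1" f] by blast
  have bb: "bdd_below (f ` K)"
  proof (rule bdd_belowI)
    fix y assume "y \<in> f ` K"
    then obtain q where q: "q \<in> K" "y = f q" by auto
    then obtain p where p: "p \<in> C" "f p - 1 < f q" using C by blast
    have "Min ((\<lambda>p. f p - 1) ` C) \<le> f p - 1" using C(2) p(1) by auto
    then show "Min ((\<lambda>p. f p - 1) ` C) \<le> y" using p q by linarith
  qed
  define v where "v = Inf (f ` K)"
  have vle: "\<And>q. q \<in> K \<Longrightarrow> v \<le> f q" unfolding v_def using bb by (simp add: cINF_lower)
  show ?thesis
  proof (rule ccontr)
    assume "\<not> ?thesis"
    note nt = this
    have gt: "\<forall>p\<in>K. v < f p"
    proof
      fix p assume p: "p \<in> K"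
      show "v < f p"
      proof (rule ccontr)
        assume "\<not> v < f p"
        then have "f p \<le> v" by simp
        then have "\<forall>q\<in>K. f p \<le> f q" using vle by (meson order.trans)
        then show False using nt p by blast
      qed
    qed
    have "\<forall>p\<in>K. \<exists>d>0. \<forall>q\<in>K. dist q p < d \<longrightarrow> (f p + v) / 2 < f q"
    proof
      fix p assume p: "p \<in> K"
      have "(f p - v) / 2 > 0" using gt p by auto
      then obtain d where "d > 0" "\<forall>q\<in>K. dist q p < d \<longrightarrow> f p - (f p - v) / 2 < f q"
        using lsc p by blast
      then show "\<exists>d>0. \<forall>q\<in>K. dist q p < d \<longrightarrow> (f p + v) / 2 < f q"
        by (auto simp: field_simps)
    qed
    then obtain C2 where C2: "C2 \<subseteq> K" "finite C2" "\<forall>q\<in>K. \<exists>p\<in>C2. (f p + v) / 2 < f q"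
      using cover_lemma[OF K(1), of "\<lambda>p. (f p + v) / 2" f] by blast
    have "C2 \<noteq> {}" using C2(3) K(2) by blast
    define w where "w = Min ((\<lambda>p. (f p + v) / 2) ` C2)"
    have wv: "v < w" unfolding w_def using C2 \<open>C2 \<noteq> {}\<close> gt
      by (subst Min_gr_iff) (auto simp: field_simps)
    have "\<forall>q\<in>K. w \<le> f q"
    proof
      fix q assume "q \<in> K"
      then obtain p where p: "p \<in> C2" "(f p + v) / 2 < f q" using C2 by blast
      have "w \<le> (f p + v) / 2" unfolding w_def using C2(2) p(1) by (intro Min_le) auto
      then show "w \<le> f q" using p by linarith
    qed
    then have "w \<le> v" unfolding v_def using K(2) by (simp add: cINF_greatest)
    then show False using wv by linarith
  qed
qed



lemma young_pow:
  fixes x e s :: real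
  assumes x: "x \<ge> 0" and s: "0 < s" "s \<le> 1" and e: "e > 0"
  shows "x powr s \<le> e + e powr ((s - 1) / s) * x"
proof (cases "x \<le> e powr (1/s)")
  case True
  have "x powr s \<le> (e powr (1/s)) powr s" using True x s by (intro powr_mono2) auto
  also have "\<dots> = e" using s e by (simp add: powr_powr)
  finally show ?thesis using e x by (simp add: add_increasing2)
next
  case False
  have ep: "e powr (1/s) > 0" using e by simp
  have xp: "x > 0" using False ep by linarith
  have "x powr s = x * x powr (s - 1)"
  proof -
    have "x powr s = x powr (1 + (s - 1))" by simp
    also have "\<dots> = x powr 1 * x powr (s - 1)" by (rule powr_add)
    finally show ?thesis using xp by simp
  qed
  also have "\<dots> \<le> x * (e powr (1/s)) powr (s - 1)"
    using False ep s xp by (intro mult_left_mono powr_mono2') auto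
  also have "\<dots> = e powr ((s - 1) / s) * x" by (simp add: powr_powr mult.commute)
  finally show ?thesis using e by simp
qed

lemma cb_pos:
  fixes c :: "real \<Rightarrow> real"
  assumes \<sigma>: "\<sigma> > 0" and b: "b \<ge> 1" and sb: "\<sigma> * (b - 1) \<le> b" and K: "K \<ge> 0"
    and cK: "\<forall>s. 0 < s \<longrightarrow> s < T \<longrightarrow> \<bar>c s\<bar> \<le> K" and e: "e > 0"
  shows "\<exists>a M. 0 \<le> a \<and> a \<le> K * e \<and> 0 \<le> M \<and>
     (\<forall>s (q::real^'n) th rr. 0 < s \<longrightarrow> s < T \<longrightarrow> 0 < th \<longrightarrow> th \<le> 1 \<longrightarrow> 1 \<le> rr \<longrightarrow>
        norm q \<le> th * b * rr powr ((b-1)/2) \<longrightarrow> - a - M * th * rr powr (b/2) \<le> c s * pw (norm q) \<sigma>)"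
proof -
  have base: "- K * norm q powr \<sigma> \<le> c s * pw (norm q) \<sigma>" if "0 < s" "s < T" for s and q :: "real^'n"
  proof -
    have "\<bar>c s\<bar> \<le> K" using cK that by blast
    then have "- K \<le> c s" by linarith
    then have "- K * norm q powr \<sigma> \<le> c s * norm q powr \<sigma>"
      by (intro mult_right_mono) auto
    then show ?thesis using \<sigma> by (simp add: pw_def)
  qed
  show ?thesis
  proof (cases "\<sigma> \<le> 1")
    case True
    define M where "M = K * e powr ((\<sigma> - 1) / \<sigma>) * b"
    have M0: "0 \<le> M" unfolding M_def using K b by simp
    have main: "\<forall>s (q::real^'n) th rr. 0 < s \<longrightarrow> s < T \<longrightarrow> 0 < th \<longrightarrow> th \<le> 1 \<longrightarrow> 1 \<le> rr \<longrightarrow>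
        norm q \<le> th * b * rr powr ((b-1)/2) \<longrightarrow> - (K * e) - M * th * rr powr (b/2) \<le> c s * pw (norm q) \<sigma>"
    proof (intro allI impI)
      fix s th rr and q :: "real^'n"
      assume s: "0 < s" "s < T" and th: "0 < th" "th \<le> 1" and rr: "1 \<le> rr"
        and q: "norm q \<le> th * b * rr powr ((b-1)/2)"
      have "rr powr ((b-1)/2) \<le> rr powr (b/2)" using rr by (intro powr_mono) auto
      then have "th * b * rr powr ((b-1)/2) \<le> th * b * rr powr (b/2)"
        using th b by (intro mult_left_mono) auto
      then have q2: "norm q \<le> th * b * rr powr (b/2)" using q by linarith
      have "norm q powr \<sigma> \<le> e + e powr ((\<sigma> - 1) / \<sigma>) * norm q"
        using young_pow[of "norm q" \<sigma> e] \<sigma> True e by simp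
      also have "\<dots> \<le> e + e powr ((\<sigma> - 1) / \<sigma>) * (th * b * rr powr (b/2))"
        using q2 by (intro add_left_mono mult_left_mono) auto
      finally have "K * norm q powr \<sigma> \<le> K * (e + e powr ((\<sigma> - 1) / \<sigma>) * (th * b * rr powr (b/2)))"
        using K by (intro mult_left_mono) auto
      then have "- K * e - M * th * rr powr (b/2) \<le> - K * norm q powr \<sigma>"
        unfolding M_def by (simp add: algebra_simps)
      then show "- (K * e) - M * th * rr powr (b/2) \<le> c s * pw (norm q) \<sigma>"
        using base[OF s, of q] by linarith
    qed
    show ?thesis
      apply (rule exI[of _ "K * e"])
      apply (rule exI[of _ M])
      using main M0 K e by simp
  next
    case False
    define M where "M = K * b powr \<sigma>"
    have M0: "0 \<le> M" unfolding M_def using K b by simp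
    have main: "\<forall>s (q::real^'n) th rr. 0 < s \<longrightarrow> s < T \<longrightarrow> 0 < th \<longrightarrow> th \<le> 1 \<longrightarrow> 1 \<le> rr \<longrightarrow>
        norm q \<le> th * b * rr powr ((b-1)/2) \<longrightarrow> - 0 - M * th * rr powr (b/2) \<le> c s * pw (norm q) \<sigma>"
    proof (intro allI impI)
      fix s th rr and q :: "real^'n"
      assume s: "0 < s" "s < T" and th: "0 < th" "th \<le> 1" and rr: "1 \<le> rr"
        and q: "norm q \<le> th * b * rr powr ((b-1)/2)"
      have "norm q powr \<sigma> \<le> (th * b * rr powr ((b-1)/2)) powr \<sigma>"
        using q \<sigma> by (intro powr_mono2) auto
      also have "\<dots> = th powr \<sigma> * b powr \<sigma> * rr powr ((b-1)/2 * \<sigma>)"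
        using th b rr by (simp add: powr_mult powr_powr)
      also have "\<dots> \<le> th * b powr \<sigma> * rr powr (b/2)"
      proof -
        have "th powr \<sigma> \<le> th" using powr_le_one_le[of th \<sigma>] th False by simp
        moreover have "rr powr ((b-1)/2 * \<sigma>) \<le> rr powr (b/2)"
          using rr sb by (intro powr_mono) (auto simp: field_simps)
        ultimately show ?thesis using th by (intro mult_mono) auto
      qed
      finally have "K * norm q powr \<sigma> \<le> K * (th * b powr \<sigma> * rr powr (b/2))"
        using K by (intro mult_left_mono) auto
      then have "- 0 - M * th * rr powr (b/2) \<le> - K * norm q powr \<sigma>"
        unfolding M_def by (simp add: algebra_simps)
      then show "- 0 - M * th * rr powr (b/2) \<le> c s * pw (norm q) \<sigma>"
        using base[OF s, of q] by linarith
    qed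
    show ?thesis
      apply (rule exI[of _ 0])
      apply (rule exI[of _ M])
      using main M0 K e by simp
  qed
qed


lemma core:
  fixes H :: "real^'n \<Rightarrow> real^'n^'n \<Rightarrow> real"
    and h :: "real^'n \<Rightarrow> real" and c Z :: "real \<Rightarrow> real"
    and u :: "real^'n \<Rightarrow> real \<Rightarrow> real" and z :: "real^'n"
  assumes Hc: "H_cont H" and A: "condA H" and B: "condB H k1" and k1: "0 < k1"
    and T: "0 < T" and hb: "bdd_below (range h)"
    and Zp: "\<forall>r. Z r \<ge> 0"
    and ulsc: "lsc_on {(x, t). 0 \<le> t \<and> t < T} u"
    and usup: "visc_super H Z c \<sigma> T u"
    and uinit: "\<forall>x. u x 0 \<ge> h x"
    and growth: "neg_part_little_o u z T b"
    and b: "1 \<le> b" and bk: "b * k1 \<le> k1 + 2"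
    and a: "0 \<le> a" and M: "0 \<le> M" and tM: "0 < tM" "tM \<le> 1"
    and cb: "\<forall>s (q::real^'n) th rr. 0 < s \<longrightarrow> s < T \<longrightarrow> 0 < th \<longrightarrow> th \<le> tM \<longrightarrow> 1 \<le> rr \<longrightarrow>
              norm q \<le> th * b * rr powr ((b-1)/2) \<longrightarrow> - a - M * th * rr powr (b/2) \<le> c s * pw (norm q) \<sigma>"
    and t0: "0 < t0" "t0 < T"
  shows "(INF y. h y) - a * t0 \<le> u x0 t0"
proof (rule ccontr)
  assume neg: "\<not> ?thesis"
  define m where "m = (INF y. h y)"
  have hm: "\<And>y. m \<le> h y" unfolding m_def using hb by (simp add: cINF_lower)
  define \<delta> where "\<delta> = m - a * t0 - u x0 t0"
  have \<delta>: "\<delta> > 0" using neg unfolding \<delta>_def m_def by simp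
  obtain C0 where C0: "C0 \<ge> 0" "\<forall>e. norm e = 1 \<longrightarrow> - C0 \<le> H e (- mat 1)"
    using H_bdd[OF Hc] by blast
  define C1 where "C1 = C0 * b * (1 + \<bar>b-2\<bar>) * b powr k1"
  have C1: "C1 \<ge> 0" unfolding C1_def using C0 b by simp
  define Lam where "Lam = C1 + M + 1"
  have Lam: "Lam > 0" unfolding Lam_def using C1 M by simp
  define t1 where "t1 = (t0 + T) / 2"
  have t1: "t0 < t1" "t1 < T" unfolding t1_def using t0 by auto
  define g0 where "g0 = gg z b x0"
  have g0: "g0 \<ge> 1" unfolding g0_def using b by (intro gg_ge1) simp
  define th0 where "th0 = min tM (\<delta> / (4 * g0)) * exp (- (Lam * T))"
  have th0: "th0 > 0" unfolding th0_def using tM \<delta> g0 by simp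
  have thle: "th0 * exp (Lam * t) \<le> tM" if "t \<le> T" for t
  proof -
    have "th0 * exp (Lam * t) = min tM (\<delta> / (4 * g0)) * exp (Lam * t - Lam * T)"
      unfolding th0_def by (simp add: exp_diff exp_minus field_simps)
    also have "\<dots> \<le> min tM (\<delta> / (4 * g0)) * 1"
      using that Lam tM \<delta> g0 by (intro mult_left_mono) (auto simp: mult_left_mono)
    also have "\<dots> \<le> tM" by simp
    finally show ?thesis .
  qed
  have thg0: "th0 * exp (Lam * t0) * g0 \<le> \<delta> / 4"
  proof -
    have "th0 * exp (Lam * t0) = min tM (\<delta> / (4 * g0)) * exp (Lam * t0 - Lam * T)"
      unfolding th0_def by (simp add: exp_diff exp_minus field_simps)
    also have "\<dots> \<le> (\<delta> / (4 * g0)) * 1"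
      using t0 Lam tM \<delta> g0 by (intro mult_mono) (auto simp: mult_left_mono)
    finally have "th0 * exp (Lam * t0) * g0 \<le> (\<delta> / (4 * g0)) * g0"
      using g0 by (intro mult_right_mono) auto
    then show ?thesis using g0 by simp
  qed
  define \<epsilon> where "\<epsilon> = \<delta> * (t1 - t0) / 4"
  have \<epsilon>: "\<epsilon> > 0" unfolding \<epsilon>_def using \<delta> t1 by simp
  define \<psi> where "\<psi> = (\<lambda>x t. m - a * t - \<epsilon> / (t1 - t) - th0 * exp (Lam * t) * gg z b x)"
  define F where "F = (\<lambda>p. u (fst p) (snd p) - \<psi> (fst p) (snd p))"
  have F0: "F (x0, t0) < 0"
  proof -
    have ne: "t1 - t0 \<noteq> 0" using t1 by simp
    have "\<epsilon> / (t1 - t0) = \<delta> / 4" unfolding \<epsilon>_def using ne by (simp add: divide_simps)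
    then show ?thesis unfolding F_def \<psi>_def using thg0 \<delta> unfolding g0_def \<delta>_def by simp
  qed
  have ev: "\<forall>\<^sub>F R in at_top. \<forall>x t. (x, t) \<in> cyl z R T \<longrightarrow> - u x t \<le> th0 / 2 * R powr b"
  proof -
    have "th0 / 2 > 0" using th0 by simp
    then show ?thesis using growth unfolding neg_part_little_o_def by blast
  qed
  define R0 where "R0 = max 1 (max (norm (x0 - z) + 1) (2 * (\<bar>m\<bar> + 1) / th0))"
  obtain R where R: "R \<ge> R0" "\<forall>x t. (x, t) \<in> cyl z R T \<longrightarrow> - u x t \<le> th0 / 2 * R powr b"
    using eventually_conj[OF ev eventually_ge_at_top[of R0]]
    unfolding eventually_at_top_linorder by (metis order_refl)
  have R1: "R \<ge> 1" and Rx: "norm (x0 - z) < R" and Rm: "2 * (\<bar>m\<bar> + 1) / th0 \<le> R"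
    using R(1) unfolding R0_def by auto
  have Rb: "R \<le> R powr b"
    using R1 b powr_mono[of 1 b R] by simp
  have Rm2: "\<bar>m\<bar> < th0 / 2 * R powr b"
  proof -
    have "2 * (\<bar>m\<bar> + 1) \<le> R * th0" using Rm th0 by (simp add: field_simps)
    also have "\<dots> \<le> R powr b * th0" using Rb th0 by (intro mult_right_mono) auto
    finally show ?thesis by (simp add: mult.commute)
  qed
  define K1 where "K1 = cball z R \<times> {0..t1}"
  have K1c: "compact K1" unfolding K1_def by (intro compact_Times compact_cball compact_Icc)
  have K1ne: "K1 \<noteq> {}" unfolding K1_def using t1 t0 R1 by auto
  have K1D: "K1 \<subseteq> {(x, t). 0 \<le> t \<and> t < T}" unfolding K1_def using t1 by auto
  have lsc1: "\<forall>p\<in>K1. \<forall>e>0. \<exists>d>0. \<forall>q\<in>K1. dist q p < d \<longrightarrow> u (fst p) (snd p) - e < u (fst q) (snd q)"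
    using ulsc K1D unfolding lsc_on_def by (meson subsetD)
  obtain p1 where p1: "p1 \<in> K1" "\<forall>q\<in>K1. u (fst p1) (snd p1) \<le> u (fst q) (snd q)"
    using lsc_attains_min[OF K1c K1ne lsc1] by blast
  define L where "L = u (fst p1) (snd p1)"
  have L: "\<And>x t. (x, t) \<in> K1 \<Longrightarrow> L \<le> u x t" using p1 unfolding L_def by fastforce
  define \<eta> where "\<eta> = min ((t1 - t0) / 2) (\<epsilon> / (\<bar>L\<bar> + \<bar>m\<bar> + 1))"
  have \<eta>: "\<eta> > 0" unfolding \<eta>_def using t1 \<epsilon> by (simp add: add_pos_nonneg)
  have \<eta>2: "\<epsilon> / \<eta> \<ge> \<bar>L\<bar> + \<bar>m\<bar> + 1"
  proof -
    have "\<eta> \<le> \<epsilon> / (\<bar>L\<bar> + \<bar>m\<bar> + 1)" unfolding \<eta>_def by simp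
    then have "\<eta> * (\<bar>L\<bar> + \<bar>m\<bar> + 1) \<le> \<epsilon>" by (simp add: field_simps add_pos_nonneg)
    then show ?thesis using \<eta> by (simp add: field_simps)
  qed
  define K2 where "K2 = cball z R \<times> {0..t1 - \<eta>}"
  have K2c: "compact K2" unfolding K2_def by (intro compact_Times compact_cball compact_Icc)
  have "\<eta> \<le> (t1 - t0) / 2" unfolding \<eta>_def by (rule min.cobounded1)
  then have x0K2: "(x0, t0) \<in> K2" unfolding K2_def using Rx t0 t1
    by (auto simp: dist_norm norm_minus_commute)
  have K2ne: "K2 \<noteq> {}" using x0K2 by auto
  have K2K1: "K2 \<subseteq> K1" unfolding K2_def K1_def using \<eta> by auto
  have psic: "continuous_on K2 (\<lambda>p. \<psi> (fst p) (snd p))"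
  proof -
    have "\<And>p. p \<in> K2 \<Longrightarrow> t1 - snd p \<noteq> 0" unfolding K2_def using \<eta> by auto
    then show ?thesis unfolding \<psi>_def by (intro continuous_intros) auto
  qed
  have lsc2: "\<forall>p\<in>K2. \<forall>e>0. \<exists>d>0. \<forall>q\<in>K2. dist q p < d \<longrightarrow> F p - e < F q"
  proof (intro ballI allI impI)
    fix p e assume p: "p \<in> K2" and e: "(e::real) > 0"
    obtain d1 where d1: "d1 > 0" "\<forall>q\<in>K1. dist q p < d1 \<longrightarrow> u (fst p) (snd p) - e/2 < u (fst q) (snd q)"
      using lsc1 p K2K1 e by (meson half_gt_zero subsetD)
    obtain d2 where d2: "d2 > 0" "\<forall>q\<in>K2. dist q p < d2 \<longrightarrow> dist (\<psi> (fst q) (snd q)) (\<psi> (fst p) (snd p)) < e/2"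
      using psic p e unfolding continuous_on_iff by (meson half_gt_zero)
    show "\<exists>d>0. \<forall>q\<in>K2. dist q p < d \<longrightarrow> F p - e < F q"
    proof (intro exI[of _ "min d1 d2"] conjI ballI impI)
      show "min d1 d2 > 0" using d1 d2 by simp
      fix q assume q: "q \<in> K2" "dist q p < min d1 d2"
      have "u (fst p) (snd p) - e/2 < u (fst q) (snd q)" using d1 q K2K1 by auto
      moreover have "\<bar>\<psi> (fst q) (snd q) - \<psi> (fst p) (snd p)\<bar> < e/2" using d2 q by (auto simp: dist_real_def)
      ultimately show "F p - e < F q" unfolding F_def by linarith
    qed
  qed
  obtain ys where ys: "ys \<in> K2" "\<forall>q\<in>K2. F ys \<le> F q"
    using lsc_attains_min[OF K2c K2ne lsc2] by blast
  obtain y s where yseq: "ys = (y, s)" by (cases ys)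
  have Fneg: "F (y, s) < 0" using ys x0K2 F0 yseq by fastforce
  have sK: "0 \<le> s" "s \<le> t1 - \<eta>" "dist z y \<le> R" using ys yseq unfolding K2_def by auto
  have s0: "0 < s"
  proof (rule ccontr)
    assume "\<not> 0 < s"
    then have s00: "s = 0" using sK by simp
    have "0 < \<epsilon> / t1 + th0 * gg z b y" using \<epsilon> t1 t0 th0 gg_ge1[of b z y] b
      by (intro add_pos_pos) auto
    also have "\<dots> \<le> u y 0 - \<psi> y 0" unfolding \<psi>_def using uinit hm[of y] by (simp add: algebra_simps) (metis order_trans)
    finally show False using Fneg s00 unfolding F_def by simp
  qed
  have sT: "s < t1" "s < T" using sK \<eta> t1 by auto
  have th_s: "th0 \<le> th0 * exp (Lam * s)" using th0 Lam s0 by simp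
  have yR: "norm (y - z) < R"
  proof (rule ccontr)
    assume "\<not> norm (y - z) < R"
    then have yR': "norm (y - z) = R" using sK by (simp add: dist_norm norm_minus_commute)
    have "(y, s) \<in> cyl z R T" unfolding cyl_def using yR' s0 sT by simp
    then have uy: "- u y s \<le> th0 / 2 * R powr b" using R(2) by blast
    have gy: "R powr b \<le> gg z b y" using gg_ge_R[OF _ yR'] b R1 by simp
    have "th0 * R powr b \<le> th0 * exp (Lam * s) * gg z b y"
      using th_s gy th0 by (intro mult_mono) auto
    moreover have "a * s \<ge> 0" using a s0 by simp
    moreover have "\<epsilon> / (t1 - s) \<ge> 0" using \<epsilon> sT by simp
    ultimately have "\<psi> y s \<le> m - th0 * R powr b" unfolding \<psi>_def by linarith
    then have "F (y, s) \<ge> th0 / 2 * R powr b - m" using uy unfolding F_def by simp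
    then show False using Fneg Rm2 by linarith
  qed
  define U where "U = ball z R \<times> {0<..<t1}"
  have Uo: "open U" unfolding U_def by (intro open_Times open_ball open_greaterThanLessThan)
  have yU: "(y, s) \<in> U" unfolding U_def using yR s0 sT by (simp add: dist_norm norm_minus_commute)
  have UT: "U \<subseteq> {(x, t). 0 < t \<and> t < T}" unfolding U_def using t1 by auto
  have Ut1: "U \<subseteq> {(x, t). t < t1}" unfolding U_def by auto
  have minU: "\<forall>x t. (x, t) \<in> U \<longrightarrow> u y s - \<psi> y s \<le> u x t - \<psi> x t"
  proof (intro allI impI)
    fix x t assume xt: "(x, t) \<in> U"
    show "u y s - \<psi> y s \<le> u x t - \<psi> x t"
    proof (cases "t \<le> t1 - \<eta>")
      case True
      then have "(x, t) \<in> K2" using xt unfolding U_def K2_def by auto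
      then show ?thesis using ys yseq unfolding F_def by fastforce
    next
      case False
      have xK1: "(x, t) \<in> K1" using xt unfolding U_def K1_def by auto
      have tt: "t1 - t < \<eta>" "0 < t1 - t" using False xt unfolding U_def by auto
      have "\<epsilon> / \<eta> \<le> \<epsilon> / (t1 - t)" using tt \<epsilon> by (intro divide_left_mono) auto
      then have e1: "\<bar>L\<bar> + \<bar>m\<bar> + 1 \<le> \<epsilon> / (t1 - t)" using \<eta>2 by linarith
      have "a * t \<ge> 0" using a xt unfolding U_def by simp
      moreover have "th0 * exp (Lam * t) * gg z b x \<ge> 0" using th0 gg_ge1[of b z x] b by simp
      ultimately have "\<psi> x t \<le> m - \<epsilon> / (t1 - t)" unfolding \<psi>_def by linarith
      then have "u x t - \<psi> x t > 0" using L[OF xK1] e1 by linarith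
      then show ?thesis using Fneg unfolding F_def by simp
    qed
  qed
  define th where "th = th0 * exp (Lam * s)"
  have th: "0 < th" "th \<le> tM" "th \<le> 1" unfolding th_def using th0 thle[of s] sT tM by auto
  have C21: "C21_on \<psi> (\<lambda>x t. -a - \<epsilon>/(t1-t)^2 - th0*Lam*exp(Lam * t)*gg z b x)
                (\<lambda>x t. (-(th0*exp(Lam * t))) *\<^sub>R Dg z b x)
                (\<lambda>x t. (-(th0*exp(Lam * t))) *\<^sub>R D2g z b x) U"
    unfolding \<psi>_def by (rule C21_barrier[OF Uo Ut1])
  have ineq: "H ((-th) *\<^sub>R Dg z b y) ((-th) *\<^sub>R D2g z b y + Z (u y s) *\<^sub>R outer ((-th) *\<^sub>R Dg z b y) ((-th) *\<^sub>R Dg z b y))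
       + c s * pw (norm ((-th) *\<^sub>R Dg z b y)) \<sigma> - (-a - \<epsilon>/(t1-s)^2 - th0*Lam*exp(Lam * s)*gg z b y) \<le> 0"
    using usup[unfolded visc_super_def, rule_format, of s y U \<psi>] s0 sT yU UT C21 minU
    unfolding th_def by blast
  have nq: "norm ((-th) *\<^sub>R Dg z b y) \<le> th * b * rho z y powr ((b-1)/2)"
    using norm_Dg[of b th z y] b th by simp
  have Hl: "- C1 * th * gg z b y \<le> H ((-th) *\<^sub>R Dg z b y) ((-th) *\<^sub>R D2g z b y + Z (u y s) *\<^sub>R outer ((-th) *\<^sub>R Dg z b y) ((-th) *\<^sub>R Dg z b y))"
    unfolding C1_def using H_lower[OF A B k1 C0(2) C0(1) b bk th(1) th(3) _ nq] Zp by blast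
  have cl: "- a - M * th * gg z b y \<le> c s * pw (norm ((-th) *\<^sub>R Dg z b y)) \<sigma>"
    using cb[rule_format, OF s0 sT(2) th(1) th(2) rho_pos[of z y] nq] unfolding gg_def by simp
  have "th0*Lam*exp(Lam * s)*gg z b y = Lam * th * gg z b y" unfolding th_def by simp
  then have "0 < (Lam - C1 - M) * th * gg z b y + \<epsilon>/(t1-s)^2
     \<and> (Lam - C1 - M) * th * gg z b y + \<epsilon>/(t1-s)^2 \<le>
       H ((-th) *\<^sub>R Dg z b y) ((-th) *\<^sub>R D2g z b y + Z (u y s) *\<^sub>R outer ((-th) *\<^sub>R Dg z b y) ((-th) *\<^sub>R Dg z b y))
       + c s * pw (norm ((-th) *\<^sub>R Dg z b y)) \<sigma> - (-a - \<epsilon>/(t1-s)^2 - th0*Lam*exp(Lam * s)*gg z b y)"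
    using Hl cl th gg_ge1[of b z y] b \<epsilon> sT unfolding Lam_def
    by (auto simp: algebra_simps intro!: add_nonneg_pos mult_nonneg_nonneg)
  then show False using ineq by linarith
qed

lemma pos_case:
  fixes H :: "real^'n \<Rightarrow> real^'n^'n \<Rightarrow> real"
    and h :: "real^'n \<Rightarrow> real" and c Z :: "real \<Rightarrow> real"
    and u :: "real^'n \<Rightarrow> real \<Rightarrow> real" and z :: "real^'n"
  assumes Hc: "H_cont H" and A: "condA H" and B: "condB H k1" and k1: "0 < k1"
    and T: "0 < T" and hb: "bdd_below (range h)"
    and Zp: "\<forall>r. Z r \<ge> 0"
    and ulsc: "lsc_on {(x, t). 0 \<le> t \<and> t < T} u"
    and usup: "visc_super H Z c \<sigma> T u"
    and uinit: "\<forall>x. u x 0 \<ge> h x"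
    and growth: "neg_part_little_o u z T b"
    and b: "1 \<le> b" and bk: "b * k1 \<le> k1 + 2"
    and \<sigma>: "0 < \<sigma>" and sb: "\<sigma> * (b - 1) \<le> b"
    and K: "K \<ge> 0" and cK: "\<forall>s. 0 < s \<longrightarrow> s < T \<longrightarrow> \<bar>c s\<bar> \<le> K"
    and t0: "0 < t0" "t0 < T"
  shows "(INF y. h y) \<le> u x0 t0"
proof (rule ccontr)
  assume "\<not> ?thesis"
  then have d: "(INF y. h y) - u x0 t0 > 0" by simp
  define e where "e = ((INF y. h y) - u x0 t0) / (2 * (K * t0 + 1))"
  have KT: "K * t0 + 1 > 0" using K t0 by (simp add: add_nonneg_pos)
  have e: "e > 0" unfolding e_def using d KT by simp
  obtain a M where aM: "0 \<le> a" "a \<le> K * e" "0 \<le> M"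
    "\<forall>s (q::real^'n) th rr. 0 < s \<longrightarrow> s < T \<longrightarrow> 0 < th \<longrightarrow> th \<le> 1 \<longrightarrow> 1 \<le> rr \<longrightarrow>
        norm q \<le> th * b * rr powr ((b-1)/2) \<longrightarrow> - a - M * th * rr powr (b/2) \<le> c s * pw (norm q) \<sigma>"
    using cb_pos[OF \<sigma> b sb K cK e] by blast
  have "(INF y. h y) - a * t0 \<le> u x0 t0"
    by (rule core[OF Hc A B k1 T hb Zp ulsc usup uinit growth b bk aM(1) aM(3) zero_less_one order_refl aM(4) t0])
  moreover have "a * t0 \<le> K * e * t0" using aM(2) t0 by (intro mult_right_mono) auto
  moreover have "K * e * t0 < (INF y. h y) - u x0 t0"
  proof -
    have "K * e * t0 = ((INF y. h y) - u x0 t0) * (K * t0) / (2 * (K * t0 + 1))"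
      unfolding e_def by (simp add: field_simps)
    also have "\<dots> = ((INF y. h y) - u x0 t0) * ((K * t0) / (2 * (K * t0 + 1)))" by simp
    also have "\<dots> < ((INF y. h y) - u x0 t0) * 1"
    proof (rule mult_strict_left_mono[OF _ d])
      show "(K * t0) / (2 * (K * t0 + 1)) < 1" using KT K t0 by (simp add: divide_less_eq)
    qed
    finally show ?thesis by simp
  qed
  ultimately show False by linarith
qed

theorem theorem2p7:
  fixes H :: "real^'n \<Rightarrow> real^'n^'n \<Rightarrow> real"
    and k1 T \<sigma> \<beta> :: real
    and h :: "real^'n \<Rightarrow> real"
    and c Z :: "real \<Rightarrow> real"
    and u :: "real^'n \<Rightarrow> real \<Rightarrow> real"
    and z :: "real^'n"
  assumes n2: "CARD('n) \<ge> 2"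
    and Hc: "H_cont H" and A: "condA H" and B: "condB H k1" and C: "condC H"
    and k: "k1 + 1 > 1"
    and T: "0 < T"
    and hc: "continuous_on UNIV h" and hb: "bdd_below (range h)"
    and cc: "continuous_on {0<..<T} c" and cb: "bounded (c ` {0<..<T})"
    and \<sigma>: "\<sigma> \<ge> 0"
    and Zp: "\<forall>r. Z r \<ge> 0" and Zm: "antimono Z" and Zc: "continuous_on UNIV Z"
    and ulsc: "lsc_on {(x, t). 0 \<le> t \<and> t < T} u"
    and usup: "visc_super H Z c \<sigma> T u"
    and uinit: "\<forall>x. u x 0 \<ge> h x"
    and growth: "neg_part_little_o u z T \<beta>"
  shows "(\<sigma> \<le> (k1 + 2) / 2 \<and> \<beta> = (k1 + 2) / ((k1 + 2) - 2) \<longrightarrow>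
            (\<forall>x t. 0 < t \<and> t < T \<longrightarrow>
               (\<sigma> = 0 \<longrightarrow> u x t \<ge> (INF y. h y) - t * (SUP s\<in>{0<..<T}. \<bar>c s\<bar>)) \<and>
               (0 < \<sigma> \<longrightarrow> u x t \<ge> (INF y. h y))))
       \<and> (\<sigma> > (k1 + 2) / 2 \<and> \<beta> = \<sigma> / (\<sigma> - 1) \<longrightarrow>
            (\<forall>x t. 0 < t \<and> t < T \<longrightarrow> u x t \<ge> (INF y. h y)))"
proof -
  have k1: "0 < k1" using k by simp
  define K where "K = (SUP s\<in>{0<..<T}. \<bar>c s\<bar>)"
  obtain B0 where B0: "\<forall>x\<in>c ` {0<..<T}. norm x \<le> B0" using cb unfolding bounded_iff by blast
  have bddK: "bdd_above ((\<lambda>s. \<bar>c s\<bar>) ` {0<..<T})"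
    using B0 by (intro bdd_aboveI[of _ B0]) auto
  have cK: "\<forall>s. 0 < s \<longrightarrow> s < T \<longrightarrow> \<bar>c s\<bar> \<le> K"
    unfolding K_def using bddK by (auto intro: cSUP_upper)
  have K0: "K \<ge> 0"
  proof -
    have "\<bar>c (T/2)\<bar> \<le> K" using cK T by simp
    then show ?thesis by linarith
  qed
  have partA: "\<sigma> \<le> (k1 + 2) / 2 \<and> \<beta> = (k1 + 2) / ((k1 + 2) - 2) \<longrightarrow>
            (\<forall>x t. 0 < t \<and> t < T \<longrightarrow>
               (\<sigma> = 0 \<longrightarrow> u x t \<ge> (INF y. h y) - t * (SUP s\<in>{0<..<T}. \<bar>c s\<bar>)) \<and>
               (0 < \<sigma> \<longrightarrow> u x t \<ge> (INF y. h y)))"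
  proof (intro impI allI)
    assume as: "\<sigma> \<le> (k1 + 2) / 2 \<and> \<beta> = (k1 + 2) / ((k1 + 2) - 2)"
    then have be: "\<beta> = (k1 + 2) / k1" by simp
    have b1: "1 \<le> \<beta>" unfolding be using k1 by (simp add: field_simps)
    have bk: "\<beta> * k1 \<le> k1 + 2" unfolding be using k1 by simp
    fix x t assume t: "0 < t \<and> t < T"
    show "(\<sigma> = 0 \<longrightarrow> u x t \<ge> (INF y. h y) - t * (SUP s\<in>{0<..<T}. \<bar>c s\<bar>)) \<and>
               (0 < \<sigma> \<longrightarrow> u x t \<ge> (INF y. h y))"
    proof (rule conjI)
    show "\<sigma> = 0 \<longrightarrow> u x t \<ge> (INF y. h y) - t * (SUP s\<in>{0<..<T}. \<bar>c s\<bar>)"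
    proof
      assume s0: "\<sigma> = 0"
      have cb0: "\<forall>s (q::real^'n) th rr. 0 < s \<longrightarrow> s < T \<longrightarrow> 0 < th \<longrightarrow> th \<le> 1 \<longrightarrow> 1 \<le> rr \<longrightarrow>
        norm q \<le> th * \<beta> * rr powr ((\<beta>-1)/2) \<longrightarrow> - K - 0 * th * rr powr (\<beta>/2) \<le> c s * pw (norm q) \<sigma>"
        using cK s0 by (auto simp: pw_def abs_le_iff)
      have "(INF y. h y) - K * t \<le> u x t"
        by (rule core[OF Hc A B k1 T hb Zp ulsc usup uinit growth b1 bk K0 order_refl zero_less_one order_refl cb0])
           (use t in auto)
      then show "u x t \<ge> (INF y. h y) - t * (SUP s\<in>{0<..<T}. \<bar>c s\<bar>)" unfolding K_def by (simp add: mult.commute)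
    qed
    show "0 < \<sigma> \<longrightarrow> u x t \<ge> (INF y. h y)"
    proof
      assume sp: "0 < \<sigma>"
      have sb: "\<sigma> * (\<beta> - 1) \<le> \<beta>"
      proof -
        have "\<beta> - 1 = 2 / k1" unfolding be using k1 by (simp add: field_simps)
        then have "\<sigma> * (\<beta> - 1) = 2 * \<sigma> / k1" by simp
        also have "\<dots> \<le> (k1 + 2) / k1" using as k1 by (intro divide_right_mono) auto
        finally show ?thesis unfolding be .
      qed
      show "u x t \<ge> (INF y. h y)"
        using pos_case[OF Hc A B k1 T hb Zp ulsc usup uinit growth b1 bk sp sb K0 cK] t by blast
    qed
    qed
  qed
  have partB: "\<sigma> > (k1 + 2) / 2 \<and> \<beta> = \<sigma> / (\<sigma> - 1) \<longrightarrow>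
            (\<forall>x t. 0 < t \<and> t < T \<longrightarrow> u x t \<ge> (INF y. h y))"
  proof (rule impI, intro allI)
    assume as: "\<sigma> > (k1 + 2) / 2 \<and> \<beta> = \<sigma> / (\<sigma> - 1)"
    then have s1: "\<sigma> > 1" using k1 by simp
    have be: "\<beta> = \<sigma> / (\<sigma> - 1)" using as by simp
    have b1: "1 \<le> \<beta>" unfolding be using s1 by (simp add: field_simps)
    have bk: "\<beta> * k1 \<le> k1 + 2"
    proof -
      have "\<sigma> * k1 \<le> (k1 + 2) * (\<sigma> - 1)" using as by (simp add: algebra_simps)
      then show ?thesis unfolding be using s1 by (simp add: field_simps)
    qed
    have sb: "\<sigma> * (\<beta> - 1) \<le> \<beta>" unfolding be using s1 by (simp add: field_simps)
    have sp: "0 < \<sigma>" using s1 by simp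
    fix x t
    show "0 < t \<and> t < T \<longrightarrow> u x t \<ge> (INF y. h y)"
      using pos_case[OF Hc A B k1 T hb Zp ulsc usup uinit growth b1 bk sp sb K0 cK] by blast
  qed
  show ?thesis using partA partB by blast
qed

end
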